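(* Let $b\in\mathcal E_1$ with $b-1$ flat at $0$, let $\theta$ be the inverse germ of $t\mapsto t\,b(t)$, write $\theta(x)=x\,c(x)$, let $\sigma(x)=\theta(x)^4$ with iterates $\sigma^n$ ($\sigma^0=\mathrm{id}$), and let $S(x)=\sum_{n=0}^{\infty}4^{-n}\log c(\sigma^n(x))$ (which converges on a neighbourhood of $0$). Then there exists $\varepsilon>0$ such that for every integer $p\ge0$ for which $S$ is of class $C^p$ on $(-\varepsilon,\varepsilon)$, writing $T=S^{(p)}$ and $\alpha=(\sigma')^p$, one has $$\lim_{n\to\infty}\frac{1}{4^n}\,\alpha(x)\,\alpha(\sigma(x))\cdots\alpha(\sigma^{n-1}(x))\,T(\sigma^n(x))=0\quad\text{for all }|x|<\varepsilon .$$
   Context: $\mathcal E_1$ denotes the ring of smooth function germs at $0\in\mathbb R$. A germ is flat at $0$ if all its derivatives (including its value) vanish at $0$. $S^{(p)}$ denotes the $p$-th derivative of $S$. *)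

theory Defs
  imports "HOL-Analysis.Analysis"
begin

definition Ck_on :: "nat \<Rightarrow> (real \<Rightarrow> real) \<Rightarrow> real set \<Rightarrow> bool" where
  "Ck_on p f U \<longleftrightarrow>
     (\<forall>k<p. \<forall>x\<in>U. ((deriv ^^ k) f) differentiable (at x)) \<and> continuous_on U ((deriv ^^ p) f)"

definition smooth_on :: "(real \<Rightarrow> real) \<Rightarrow> real set \<Rightarrow> bool" where
  "smooth_on f U \<longleftrightarrow> (\<forall>p. Ck_on p f U)"

definition smooth_germ :: "(real \<Rightarrow> real) \<Rightarrow> bool" where
  "smooth_germ f \<longleftrightarrow> (\<exists>r>0. smooth_on f {-r<..<r})"

definition flat_at0 :: "(real \<Rightarrow> real) \<Rightarrow> bool" where
  "flat_at0 f \<longleftrightarrow> (\<forall>k. (deriv ^^ k) f 0 = 0)"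

definition inverse_germ :: "(real \<Rightarrow> real) \<Rightarrow> (real \<Rightarrow> real) \<Rightarrow> bool" where
  "inverse_germ theta f \<longleftrightarrow>
     (\<exists>d>0. \<forall>t. \<bar>t\<bar> < d \<longrightarrow> theta (f t) = t) \<and>
     (\<exists>d>0. \<forall>x. \<bar>x\<bar> < d \<longrightarrow> f (theta x) = x)"

text \<open>c with theta(x) = x c(x); at 0, c takes its (smooth) limit value theta'(0) = 1.\<close>
definition cfun :: "(real \<Rightarrow> real) \<Rightarrow> real \<Rightarrow> real" where
  "cfun theta x = (if x = 0 then 1 else theta x / x)"

definition sigma :: "(real \<Rightarrow> real) \<Rightarrow> real \<Rightarrow> real" where
  "sigma theta x = (theta x) ^ 4"

definition Sfun :: "(real \<Rightarrow> real) \<Rightarrow> real \<Rightarrow> real" where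
  "Sfun theta x = (\<Sum>n. (1 / 4 ^ n) * ln (cfun theta ((sigma theta ^^ n) x)))"

end

theory Submission
  imports Defs
begin

lemma theta_local:
  fixes b theta :: "real \<Rightarrow> real"
  assumes "smooth_germ b"
    and "flat_at0 (\<lambda>t. b t - 1)"
    and "inverse_germ theta (\<lambda>t. t * b t)"
  shows "\<exists>e>0. \<forall>y. \<bar>y\<bar> < e \<longrightarrow> \<bar>theta y\<bar> \<le> 2 * \<bar>y\<bar> \<and>
            (\<exists>D. (theta has_real_derivative D) (at y) \<and> \<bar>D\<bar> \<le> 2)"
proof -
  define f where "f = (\<lambda>t::real. t * b t)"
  obtain r where r: "r > 0" "smooth_on b {-r<..<r}" using assms(1) unfolding smooth_germ_def by blast
  have C1: "Ck_on 1 b {-r<..<r}" using r(2) unfolding smooth_on_def by blast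
  have bd: "\<And>x. \<bar>x\<bar> < r \<Longrightarrow> b differentiable (at x)"
    using C1 unfolding Ck_on_def by (auto simp: abs_less_iff)
  have dc: "continuous_on {-r<..<r} (deriv b)" using C1 unfolding Ck_on_def by simp
  have b0: "b 0 = 1" using assms(2) unfolding flat_at0_def by (metis funpow_0 eq_iff_diff_eq_0)
  define g where "g t = b t + t * deriv b t" for t
  have fd: "(f has_real_derivative g t) (at t)" if "\<bar>t\<bar> < r" for t
  proof -
    have "(b has_real_derivative deriv b t) (at t)"
      using bd[OF that] by (simp add: DERIV_deriv_iff_real_differentiable)
    then show ?thesis unfolding f_def g_def
      by (auto intro!: derivative_eq_intros)
  qed
  have "isCont (deriv b) 0"
    using dc r(1) by (meson continuous_on_eq_continuous_at open_greaterThanLessThan greaterThanLessThan_iff neg_less_0_iff_less)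
  moreover have "isCont b 0" using bd[of 0] r(1) by (simp add: differentiable_imp_continuous_within)
  ultimately have "isCont g 0" unfolding g_def by (intro continuous_intros)
  then obtain r1 where r1: "r1 > 0" "\<And>t. dist t 0 < r1 \<Longrightarrow> dist (g t) (g 0) < 1/2"
    unfolding continuous_at_eps_delta by (meson zero_less_divide_1_iff zero_less_numeral)
  have g0: "g 0 = 1" using b0 g_def by simp
  have gpos: "g t > 1/2" if "\<bar>t\<bar> < r1" for t
  proof -
    have "\<bar>g t - 1\<bar> < 1/2" using r1(2)[of t] that g0 by (simp add: dist_real_def)
    then show ?thesis unfolding abs_less_iff by linarith
  qed
  obtain d1 where d1: "d1 > 0" "\<And>t. \<bar>t\<bar> < d1 \<Longrightarrow> theta (f t) = t"
    using assms(3) unfolding inverse_germ_def f_def by blast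
  define R where "R = min (min r r1) d1"
  have R: "R > 0" using r r1 d1 by (simp add: R_def)
  have inR: "\<bar>t\<bar> < R \<Longrightarrow> (f has_real_derivative g t) (at t) \<and> g t > 1/2 \<and> theta (f t) = t" for t
    using fd gpos d1 by (auto simp: R_def)
  define \<rho> where "\<rho> = R / 2"
  have \<rho>: "\<rho> > 0" "\<rho> < R" using R by (auto simp: \<rho>_def)
  have f0: "f 0 = 0" by (simp add: f_def)
  have fbig: "\<bar>f t\<bar> \<ge> \<bar>t\<bar> / 2 \<and> (t \<ge> 0 \<longrightarrow> f t \<ge> t / 2) \<and> (t \<le> 0 \<longrightarrow> f t \<le> t / 2)"
    if "\<bar>t\<bar> \<le> \<rho>" for t
  proof (cases "t = 0")
    case True then show ?thesis using f0 by simp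
  next
    case False
    show ?thesis
    proof (cases "t > 0")
      case True
      have "\<exists>z. 0 < z \<and> z < t \<and> f t - f 0 = (t - 0) * g z"
        by (rule MVT2[OF True]) (use inR \<rho> that in auto)
      then obtain z where z: "0 < z" "z < t" "f t = t * g z" using f0 by auto
      have "g z > 1/2" using inR[of z] z that \<rho> by auto
      then have "t * g z \<ge> t * (1/2)" using True by (intro mult_left_mono) auto
      then show ?thesis using z True by auto
    next
      case neg: False
      then have tn: "t < 0" using False by simp
      have "\<exists>z. t < z \<and> z < 0 \<and> f 0 - f t = (0 - t) * g z"
        by (rule MVT2[OF tn]) (use inR \<rho> that in auto)
      then obtain z where z: "t < z" "z < 0" "- f t = (- t) * g z" using f0 by auto
      have "g z > 1/2" using inR[of z] z that \<rho> by auto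
      then have "(-t) * g z \<ge> (-t) * (1/2)" using tn by (intro mult_left_mono) auto
      then have "f t \<le> t / 2" using z by linarith
      then show ?thesis using tn by auto
    qed
  qed
  have fcont: "continuous_on {-\<rho>..\<rho>} f"
  proof (intro continuous_at_imp_continuous_on ballI)
    fix x assume "x \<in> {-\<rho>..\<rho>}"
    then have "\<bar>x\<bar> < R" using \<rho> by auto
    then show "isCont f x" using inR[of x] by (auto intro: DERIV_isCont)
  qed
  have pre: "\<exists>t. \<bar>t\<bar> \<le> \<rho> \<and> f t = y \<and> theta y = t" if "\<bar>y\<bar> < \<rho>/2" for y
  proof -
    have "f (-\<rho>) \<le> -\<rho>/2" using fbig[of "-\<rho>"] \<rho> by simp
    moreover have "f \<rho> \<ge> \<rho>/2" using fbig[of "\<rho>"] \<rho> by simp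
    moreover have "-\<rho>/2 < y" "y < \<rho>/2" using that unfolding abs_less_iff by linarith+
    ultimately have "f (-\<rho>) \<le> y" "y \<le> f \<rho>" by linarith+
    then obtain t where t: "-\<rho> \<le> t" "t \<le> \<rho>" "f t = y"
      using IVT'[of f "-\<rho>" y \<rho>] fcont \<rho> by auto
    then have "theta y = t" using inR[of t] \<rho> by auto
    then show ?thesis using t by auto
  qed
  have key: "\<bar>theta y\<bar> \<le> 2 * \<bar>y\<bar> \<and>
            (\<exists>D. (theta has_real_derivative D) (at y) \<and> \<bar>D\<bar> \<le> 2)" if y: "\<bar>y\<bar> < \<rho>/2" for y
  proof -
    obtain t where t: "\<bar>t\<bar> \<le> \<rho>" "f t = y" "theta y = t" using pre[OF y] by blast
    have A: "\<bar>theta y\<bar> \<le> 2 * \<bar>y\<bar>" using fbig[OF t(1)] t by auto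
    have gt: "(f has_real_derivative g t) (at t)" "g t > 1/2" using inR[of t] t \<rho> by auto
    have zR: "\<bar>z\<bar> < R" if "\<bar>z - t\<bar> \<le> (R - \<bar>t\<bar>)/2" for z
    proof -
      have "\<bar>z\<bar> \<le> \<bar>t\<bar> + \<bar>z - t\<bar>" using abs_triangle_ineq[of t "z-t"] by simp
      then show ?thesis using that t \<rho> by (simp add: field_simps)
    qed
    have ct: "isCont theta (f t)"
      by (rule isCont_inverse_function[where d="(R - \<bar>t\<bar>)/2"])
        (use t \<rho> zR inR in \<open>auto intro: DERIV_isCont\<close>)
    have "(theta has_real_derivative inverse (g t)) (at y)"
    proof (rule DERIV_inverse_function[where f=f and a="-\<rho>/2" and b="\<rho>/2"])
      show "(f has_real_derivative g t) (at (theta y))" using gt t by simp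
      show "g t \<noteq> 0" using gt by simp
      show "- \<rho> / 2 < y" "y < \<rho> / 2" using y by auto
      show "isCont theta y" using ct t by simp
      fix z assume "- \<rho> / 2 < z" "z < \<rho> / 2"
      then show "f (theta z) = z" using pre[of z] by auto
    qed
    moreover have "\<bar>inverse (g t)\<bar> \<le> 2"
    proof -
      have "inverse (g t) \<le> inverse (1/2)" using gt by (intro le_imp_inverse_le) auto
      then show ?thesis using gt by simp
    qed
    ultimately show ?thesis using A by blast
  qed
  show ?thesis using key \<rho> by (intro exI[of _ "\<rho>/2"]) auto
qed

lemma aux:
  fixes P Tv B :: real
  assumes "\<bar>P\<bar> \<le> 1" "\<bar>Tv\<bar> \<le> B"
  shows "norm ((1 / 4 ^ n) * P * Tv) \<le> B * (1/4) ^ n"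
proof -
  have "norm ((1 / 4 ^ n) * P * Tv) = (1/4)^n * (\<bar>P\<bar> * \<bar>Tv\<bar>)"
    by (simp add: abs_mult power_divide)
  also have "\<dots> \<le> (1/4)^n * (1 * B)"
    using assms by (intro mult_left_mono mult_mono) auto
  finally show ?thesis by (simp add: mult.commute)
qed

theorem lemma3p10:
  fixes b theta :: "real \<Rightarrow> real"
  assumes "smooth_germ b"
    and "flat_at0 (\<lambda>t. b t - 1)"
    and "inverse_germ theta (\<lambda>t. t * b t)"
  shows "\<exists>\<epsilon>>0. \<forall>p::nat. Ck_on p (Sfun theta) {-\<epsilon><..<\<epsilon>} \<longrightarrow>
           (\<forall>x. \<bar>x\<bar> < \<epsilon> \<longrightarrow>
              (\<lambda>n. (1 / 4 ^ n) * (\<Prod>k<n. (deriv (sigma theta) ((sigma theta ^^ k) x)) ^ p)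
                    * (deriv ^^ p) (Sfun theta) ((sigma theta ^^ n) x)) \<longlonglongrightarrow> 0)"
proof -
  obtain e where e: "e > 0" and H: "\<And>y. \<bar>y\<bar> < e \<Longrightarrow> \<bar>theta y\<bar> \<le> 2 * \<bar>y\<bar> \<and>
            (\<exists>D. (theta has_real_derivative D) (at y) \<and> \<bar>D\<bar> \<le> 2)"
    using theta_local[OF assms] by blast
  define \<epsilon> where "\<epsilon> = min e (1/4::real)"
  have \<epsilon>: "\<epsilon> > 0" "\<epsilon> \<le> e" "\<epsilon> \<le> 1/4" using e by (auto simp: \<epsilon>_def)
  have sig_eq: "sigma theta = (\<lambda>y. theta y ^ 4)" by (rule ext) (simp add: sigma_def)
  have hy: "\<bar>sigma theta y\<bar> \<le> \<bar>y\<bar> \<and> \<bar>deriv (sigma theta) y\<bar> \<le> 1" if y: "\<bar>y\<bar> < \<epsilon>" for y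
  proof -
    obtain D where D: "(theta has_real_derivative D) (at y)" "\<bar>D\<bar> \<le> 2"
      and th: "\<bar>theta y\<bar> \<le> 2 * \<bar>y\<bar>" using H[of y] y \<epsilon> by auto
    define a where "a = \<bar>theta y\<bar>"
    have a0: "a \<ge> 0" by (simp add: a_def)
    have a1: "a \<le> 1/2" using th y \<epsilon> by (simp add: a_def)
    have a2: "a \<le> 2 * \<bar>y\<bar>" using th by (simp add: a_def)
    have a3: "a ^ 3 \<le> (1/2) ^ 3" using a0 a1 by (intro power_mono) auto
    have "\<bar>sigma theta y\<bar> = a ^ 3 * a" by (simp add: sigma_def a_def power_abs power_Suc2 [symmetric] del: power_Suc2)
    also have "\<dots> \<le> (1/2)^3 * (2 * \<bar>y\<bar>)" using a3 a2 a0 by (intro mult_mono) auto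
    also have "\<dots> \<le> \<bar>y\<bar>" by (simp add: power_divide)
    finally have s1: "\<bar>sigma theta y\<bar> \<le> \<bar>y\<bar>" .
    have "((\<lambda>y. theta y ^ 4) has_real_derivative of_nat 4 * (D * theta y ^ (4 - Suc 0))) (at y)"
      by (rule DERIV_power[OF D(1)])
    then have "deriv (sigma theta) y = 4 * (D * theta y ^ 3)" unfolding sig_eq by (simp add: DERIV_imp_deriv)
    then have "\<bar>deriv (sigma theta) y\<bar> = 4 * (\<bar>D\<bar> * a ^ 3)" by (simp add: a_def abs_mult power_abs)
    also have "\<dots> \<le> 4 * (2 * (1/2)^3)" using D(2) a3 a0 by (intro mult_left_mono mult_mono) auto
    also have "\<dots> = 1" by (simp add: power_divide)
    finally show ?thesis using s1 by simp
  qed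
  have iter: "\<bar>(sigma theta ^^ n) x\<bar> \<le> \<bar>x\<bar>" if x: "\<bar>x\<bar> < \<epsilon>" for x n
  proof (induction n)
    case 0 then show ?case by simp
  next
    case (Suc n)
    then have "\<bar>(sigma theta ^^ n) x\<bar> < \<epsilon>" using x by linarith
    then show ?case using hy Suc by (metis funpow.simps(2) o_apply order_trans)
  qed
  show ?thesis
  proof (intro exI[of _ \<epsilon>] conjI allI impI)
    show "\<epsilon> > 0" by (rule \<epsilon>(1))
    fix p :: nat and x :: real
    assume Ck: "Ck_on p (Sfun theta) {-\<epsilon><..<\<epsilon>}" and x: "\<bar>x\<bar> < \<epsilon>"
    define T where "T = (deriv ^^ p) (Sfun theta)"
    have "continuous_on {-\<epsilon><..<\<epsilon>} T" using Ck unfolding Ck_on_def T_def by simp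
    moreover have "{-\<bar>x\<bar>..\<bar>x\<bar>} \<subseteq> {-\<epsilon><..<\<epsilon>}" using x by auto
    ultimately have "continuous_on {-\<bar>x\<bar>..\<bar>x\<bar>} T" by (rule continuous_on_subset)
    then obtain B where B: "B \<ge> 0" "\<And>y. y \<in> {-\<bar>x\<bar>..\<bar>x\<bar>} \<Longrightarrow> norm (T y) \<le> B"
      using continuous_on_compact_bound[of "{-\<bar>x\<bar>..\<bar>x\<bar>}" T] by auto
    have bnd: "norm ((1 / 4 ^ n) * (\<Prod>k<n. (deriv (sigma theta) ((sigma theta ^^ k) x)) ^ p)
                    * T ((sigma theta ^^ n) x)) \<le> B * (1/4) ^ n" for n
    proof -
      have P: "\<bar>\<Prod>k<n. (deriv (sigma theta) ((sigma theta ^^ k) x)) ^ p\<bar> \<le> 1"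
      proof -
        have "\<bar>\<Prod>k<n. (deriv (sigma theta) ((sigma theta ^^ k) x)) ^ p\<bar>
            = (\<Prod>k<n. \<bar>deriv (sigma theta) ((sigma theta ^^ k) x)\<bar> ^ p)"
          by (simp add: abs_prod power_abs)
        also have "\<dots> \<le> 1"
        proof (rule prod_le_1)
          fix k assume "k \<in> {..<n}"
          have "\<bar>(sigma theta ^^ k) x\<bar> < \<epsilon>" using iter[OF x, of k] x by linarith
          then have "\<bar>deriv (sigma theta) ((sigma theta ^^ k) x)\<bar> \<le> 1" using hy by blast
          then show "0 \<le> \<bar>deriv (sigma theta) ((sigma theta ^^ k) x)\<bar> ^ p \<and>
                     \<bar>deriv (sigma theta) ((sigma theta ^^ k) x)\<bar> ^ p \<le> 1"
            by (simp add: power_le_one)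
        qed
        finally show ?thesis .
      qed
      have Tb: "\<bar>T ((sigma theta ^^ n) x)\<bar> \<le> B"
        using B(2)[of "(sigma theta ^^ n) x"] iter[OF x, of n] by (auto simp: abs_le_iff)
      show ?thesis by (rule aux[OF P Tb])
    qed
    have "(\<lambda>n. B * (1/4::real) ^ n) \<longlonglongrightarrow> B * 0"
      by (intro tendsto_mult tendsto_const LIMSEQ_power_zero) simp
    then have lim: "(\<lambda>n. B * (1/4::real) ^ n) \<longlonglongrightarrow> 0" by simp
    show "(\<lambda>n. (1 / 4 ^ n) * (\<Prod>k<n. (deriv (sigma theta) ((sigma theta ^^ k) x)) ^ p)
                    * (deriv ^^ p) (Sfun theta) ((sigma theta ^^ n) x)) \<longlonglongrightarrow> 0"
    proof (rule Lim_null_comparison[OF _ lim])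
      show "\<forall>\<^sub>F n in sequentially. norm ((1 / 4 ^ n) * (\<Prod>k<n. (deriv (sigma theta) ((sigma theta ^^ k) x)) ^ p)
                    * (deriv ^^ p) (Sfun theta) ((sigma theta ^^ n) x)) \<le> B * (1/4::real) ^ n"
        by (intro always_eventually allI) (rule bnd[unfolded T_def])
    qed
  qed
qed

end
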